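(* Under the setting of the context, let $p\in\mathbb R$ and $\epsilon\in(0,1]$, and assume $\mathbb E[|Z|^{1+\epsilon}]<\infty$. Then there is a constant $C$ (depending on $p$, $\epsilon$ and the laws of $W$ and $Z$, but not on $j$ or $m$) such that for all $m\ge0$ and $j\ge0$, $$\mathbb E\big[|\mathcal M^{(m)}_j(p)|^{1+\epsilon}\big]\le C\,2^{-j(1+\epsilon)\tau(p)}\sum_{k=0}^j2^{-k\tau(p(1+\epsilon))}\,2^{k(1+\epsilon)\tau(p)}.$$
   Context: Let $W$ be a real random variable with $\mathbb P(W>0)=1$, $\mathbb E[W]=1$ and $\mathbb E[W^q]<\infty$ for all $q\in\mathbb R$; define $\tau(q)=q-\log_2\mathbb E[W^q]-1$. For words $r=(r_1,\dots,r_j)\in\{0,1\}^j$ write $r|i=(r_1,\dots,r_i)$ and $rr'$ for concatenation. For each $m\ge0$ let $(W^{(m)}_r)_r$, indexed by nonempty finite words, be i.i.d. copies of $W$, independent across $m$. For each $m,j\ge0$ and $r\in\{0,1\}^j$ let $Z^{(m,r)}$ be a real random variable measurable with respect to $\sigma(W^{(m)}_{rr'}: r'\text{ nonempty})$, with law not depending on $(m,r)$; $Z$ denotes a variable with this law. Define $\mathcal M^{(m)}_j(p)=2^{-jp}\sum_{r\in\{0,1\}^j}\prod_{i=1}^j(W^{(m)}_{r|i})^pZ^{(m,r)}$. *)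

theory Defs
  imports "HOL-Probability.Probability"
begin

text \<open>Words in {0,1}^j are represented as bool lists of length j; r|i is take i r.\<close>

definition tau :: "'a measure \<Rightarrow> ('a \<Rightarrow> real) \<Rightarrow> real \<Rightarrow> real" where
  "tau M W q = q - log 2 (integral\<^sup>L M (\<lambda>x. W x powr q)) - 1"

definition measurable_wrt :: "'a measure \<Rightarrow> ('a \<Rightarrow> real) \<Rightarrow> ('i \<Rightarrow> 'a \<Rightarrow> real) \<Rightarrow> 'i set \<Rightarrow> bool" where
  "measurable_wrt M X Y I \<longleftrightarrow>
     (\<forall>A \<in> sets borel. X -` A \<inter> space M \<in>
        sigma_sets (space M) (\<Union>i\<in>I. {Y i -` B \<inter> space M | B. B \<in> sets borel}))"

definition cascM :: "(nat \<Rightarrow> bool list \<Rightarrow> 'a \<Rightarrow> real) \<Rightarrow> (nat \<Rightarrow> bool list \<Rightarrow> 'a \<Rightarrow> real)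
    \<Rightarrow> nat \<Rightarrow> nat \<Rightarrow> real \<Rightarrow> 'a \<Rightarrow> real" where
  "cascM Wf Zf m j p x = 2 powr (- real j * p) *
     (\<Sum>r\<in>{r::bool list. length r = j}. (\<Prod>i\<in>{1..j}. Wf m (take i r) x powr p) * Zf m r x)"

end

theory Submission
  imports Defs
begin


lemma g_nonneg:
  fixes r t :: real
  assumes r: "1 < r" "r \<le> 2" and t: "\<bar>t\<bar> \<le> 1/2"
  shows "(1+t) powr r \<le> 1 + r*t + 2*t^2"
proof -
  define g where "g t = 1 + r*t + 2*t^2 - (1+t) powr r" for t
  define g' where "g' t = r + 4*t - r*(1+t) powr (r-1)" for t
  have D: "(g has_real_derivative g' s) (at s)" if "-1 < s" for s
  proof -
    have "((\<lambda>s. (1+s) powr r) has_real_derivative (r * (1+s) powr (r-1)) * 1) (at s)"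
      by (rule DERIV_chain2[of "\<lambda>x. x powr r"]) (use that in \<open>auto intro!: derivative_eq_intros\<close>)
    then show ?thesis using that unfolding g_def g'_def
      by (auto intro!: derivative_eq_intros simp: power2_eq_square algebra_simps)
  qed
  have pos: "g' s \<ge> 0" if "0 \<le> s" for s
  proof -
    have "(1+s) powr (r-1) \<le> (1+s) powr 1" using that r by (intro powr_mono) auto
    then have "r*(1+s) powr (r-1) \<le> r*(1+s)" using r that by (simp add: mult_left_mono)
    moreover have "r * s \<le> 4 * s" using that r by (intro mult_right_mono) auto
    ultimately show ?thesis using that r unfolding g'_def by (auto simp: algebra_simps)
  qed
  have neg: "g' s \<le> 0" if "s \<le> 0" "-1/2 \<le> s" for s
  proof -
    have "(1+s) powr 1 \<le> (1+s) powr (r-1)" using that r by (intro powr_mono') auto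
    then have "r*(1+s) \<le> r*(1+s) powr (r-1)" using r that by (simp add: mult_left_mono)
    moreover have "4 * s \<le> r * s" using that r by (intro mult_right_mono_neg) auto
    ultimately show ?thesis using that r unfolding g'_def by (auto simp: algebra_simps)
  qed
  have g0: "g 0 = 0" unfolding g_def by simp
  have "g t \<ge> 0"
  proof (cases "t = 0")
    case True then show ?thesis using g0 by simp
  next
    case False
    show ?thesis
    proof (cases "t > 0")
      case True
      obtain z where z: "0 < z" "z < t" "g t - g 0 = (t - 0) * g' z"
        using MVT2[of 0 t g g'] True D t by force
      then show ?thesis using pos[of z] True g0 by simp
    next
      case False': False
      then have tn: "t < 0" using False by simp
      obtain z where z: "t < z" "z < 0" "g 0 - g t = (0 - t) * g' z"
        using MVT2[of t 0 g g'] tn D t by force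
      have "g' z \<le> 0" using neg[of z] z t by auto
      then have "(0 - t) * g' z \<le> 0" using tn by (smt (verit) mult_nonneg_nonpos)
      then show ?thesis using z g0 by simp
    qed
  qed
  then show ?thesis unfolding g_def by simp
qed

definition phi :: "real \<Rightarrow> real \<Rightarrow> real" where
  "phi r x = sgn x * \<bar>x\<bar> powr (r - 1)"

lemma ineq_pos_small:
  fixes r x y :: real
  assumes r: "1 < r" "r \<le> 2" and x: "0 < x" and y: "\<bar>y\<bar> \<le> x/2"
  shows "\<bar>x+y\<bar> powr r \<le> x powr r + r * x powr (r-1) * y + 2 * \<bar>y\<bar> powr r"
proof -
  define t where "t = y / x"
  have t: "\<bar>t\<bar> \<le> 1/2" using x y by (simp add: t_def abs_divide field_simps)
  have xy: "x + y = x * (1+t)" using x by (simp add: t_def field_simps)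
  have 1: "\<bar>x+y\<bar> powr r = x powr r * (1+t) powr r"
    using x t by (simp add: xy abs_mult powr_mult)
  have "t^2 = \<bar>t\<bar> powr 2" by (simp add: powr_numeral)
  also have "\<dots> \<le> \<bar>t\<bar> powr r" using t r by (intro powr_mono') auto
  finally have t2: "t^2 \<le> \<bar>t\<bar> powr r" .
  have "\<bar>x+y\<bar> powr r \<le> x powr r * (1 + r*t + 2*t^2)"
    unfolding 1 using g_nonneg[OF r t] x by (intro mult_left_mono) auto
  also have "\<dots> \<le> x powr r * (1 + r*t + 2*\<bar>t\<bar> powr r)"
    using t2 x by (intro mult_left_mono) auto
  also have "\<dots> = x powr r + r * x powr (r-1) * y + 2 * \<bar>y\<bar> powr r"
  proof -
    have a: "x powr r * t = x powr (r-1) * y" using x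
      by (simp add: t_def powr_diff field_simps)
    have b: "x powr r * \<bar>t\<bar> powr r = \<bar>y\<bar> powr r" using x
      by (simp add: t_def abs_divide powr_divide)
    show ?thesis using a b by (simp add: algebra_simps)
  qed
  finally show ?thesis .
qed

lemma ineq_main:
  fixes r x y :: real
  assumes r: "1 < r" "r \<le> 2"
  shows "\<bar>x+y\<bar> powr r \<le> \<bar>x\<bar> powr r + r * phi r x * y + 17 * \<bar>y\<bar> powr r"
proof (cases "\<bar>y\<bar> \<le> \<bar>x\<bar>/2 \<and> x \<noteq> 0")
  case True
  show ?thesis
  proof (cases "x > 0")
    case True': True
    then show ?thesis using ineq_pos_small[OF r True'] True
      by (simp add: phi_def) (smt (verit) powr_ge_zero)
  next
    case False
    then have xn: "0 < -x" using True by auto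
    have ab: "\<bar>-x - y\<bar> = -x - y" using True False by auto
    have "\<bar>(-x)+(-y)\<bar> powr r \<le> (-x) powr r + r * (-x) powr (r-1) * (-y) + 2 * \<bar>-y\<bar> powr r"
      using ineq_pos_small[OF r xn, of "-y"] True False ab by (simp add: algebra_simps)
    moreover have "\<bar>-x - y\<bar> = -x - y" using True False by auto
    ultimately show ?thesis using xn by (simp add: phi_def) (smt (verit) powr_ge_zero)
  qed
next
  case False
  then have big: "\<bar>x\<bar> \<le> 2*\<bar>y\<bar>" by auto
  have "\<bar>x+y\<bar> powr r \<le> (3*\<bar>y\<bar>) powr r" using big r by (intro powr_mono2) auto
  also have "\<dots> = 3 powr r * \<bar>y\<bar> powr r" by (simp add: powr_mult)
  also have "\<dots> \<le> 9 * \<bar>y\<bar> powr r"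
  proof -
    have "3 powr r \<le> 3 powr (2::real)" using r by (intro powr_mono) auto
    then show ?thesis by (intro mult_right_mono) (auto simp: powr_numeral)
  qed
  finally have A: "\<bar>x+y\<bar> powr r \<le> 9 * \<bar>y\<bar> powr r" .
  have B: "\<bar>r * phi r x * y\<bar> \<le> 4 * \<bar>y\<bar> powr r"
  proof -
    have "\<bar>phi r x\<bar> \<le> \<bar>x\<bar> powr (r-1)" by (simp add: phi_def abs_mult sgn_if)
    also have "\<dots> \<le> (2*\<bar>y\<bar>) powr (r-1)" using big r by (intro powr_mono2) auto
    also have "\<dots> = 2 powr (r-1) * \<bar>y\<bar> powr (r-1)" by (simp add: powr_mult)
    also have "\<dots> \<le> 2 * \<bar>y\<bar> powr (r-1)"
    proof -
      have "2 powr (r-1) \<le> 2 powr (1::real)" using r by (intro powr_mono) auto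
      then show ?thesis by (intro mult_right_mono) auto
    qed
    finally have p: "\<bar>phi r x\<bar> \<le> 2 * \<bar>y\<bar> powr (r-1)" .
    have "\<bar>r * phi r x * y\<bar> = r * \<bar>phi r x\<bar> * \<bar>y\<bar>" using r by (simp add: abs_mult)
    also have "\<dots> \<le> 2 * (2 * \<bar>y\<bar> powr (r-1)) * \<bar>y\<bar>"
      using r p by (intro mult_right_mono mult_mono) auto
    also have "\<dots> = 4 * \<bar>y\<bar> powr r"
      by (cases "y = 0") (auto simp: powr_diff field_simps)
    finally show ?thesis .
  qed
  have C: "0 \<le> \<bar>x\<bar> powr r" by simp
  show ?thesis using A B C by (smt (verit) powr_ge_zero)
qed




lemma young_r:
  fixes r x y :: real
  assumes r: "1 < r"
  shows "\<bar>x\<bar> powr (r-1) * \<bar>y\<bar> \<le> \<bar>x\<bar> powr r + \<bar>y\<bar> powr r"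
proof (cases "\<bar>x\<bar> \<le> \<bar>y\<bar>")
  case True
  have "\<bar>x\<bar> powr (r-1) * \<bar>y\<bar> \<le> \<bar>y\<bar> powr (r-1) * \<bar>y\<bar>"
    using True r by (intro mult_right_mono powr_mono2) auto
  also have "\<dots> = \<bar>y\<bar> powr r" by (cases "y=0") (auto simp: powr_diff)
  finally show ?thesis by (smt (verit) powr_ge_zero)
next
  case False
  have "\<bar>x\<bar> powr (r-1) * \<bar>y\<bar> \<le> \<bar>x\<bar> powr (r-1) * \<bar>x\<bar>"
    using False r by (intro mult_left_mono) auto
  also have "\<dots> = \<bar>x\<bar> powr r" using False by (auto simp: powr_diff)
  finally show ?thesis by (smt (verit) powr_ge_zero)
qed

lemma phi_abs: "\<bar>phi r x\<bar> = \<bar>x\<bar> powr (r-1)"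
  by (simp add: phi_def abs_mult sgn_if)

lemma borel_measurable_phi[measurable]:
  "f \<in> borel_measurable N \<Longrightarrow> (\<lambda>x. phi r (f x)) \<in> borel_measurable N"
  unfolding phi_def by (intro borel_measurable_times borel_measurable_sgn measurable_abs_powr) auto

lemma integrable_phi_mult:
  fixes X Y :: "'a \<Rightarrow> real"
  assumes r: "1 < r" and m: "X \<in> borel_measurable M" "Y \<in> borel_measurable M"
    and i: "integrable M (\<lambda>x. \<bar>X x\<bar> powr r)" "integrable M (\<lambda>x. \<bar>Y x\<bar> powr r)"
  shows "integrable M (\<lambda>x. phi r (X x) * Y x)"
proof (rule Bochner_Integration.integrable_bound)
  show "integrable M (\<lambda>x. \<bar>X x\<bar> powr r + \<bar>Y x\<bar> powr r)" using i by auto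
  show "(\<lambda>x. phi r (X x) * Y x) \<in> borel_measurable M" using m by measurable
  show "AE x in M. norm (phi r (X x) * Y x) \<le> norm (\<bar>X x\<bar> powr r + \<bar>Y x\<bar> powr r)"
    using young_r[OF r] by (auto simp: abs_mult phi_abs)
qed

lemma (in prob_space) step2:
  fixes X Y :: "'a \<Rightarrow> real"
  assumes r: "1 < r" "r \<le> 2" and m: "X \<in> borel_measurable M" "Y \<in> borel_measurable M"
    and i: "integrable M (\<lambda>x. \<bar>X x\<bar> powr r)" "integrable M (\<lambda>x. \<bar>Y x\<bar> powr r)"
    and o: "(\<integral>x. phi r (X x) * Y x \<partial>M) = 0"
  shows "integrable M (\<lambda>x. \<bar>X x + Y x\<bar> powr r)"
    "(\<integral>x. \<bar>X x + Y x\<bar> powr r \<partial>M) \<le> (\<integral>x. \<bar>X x\<bar> powr r \<partial>M) + 17 * (\<integral>x. \<bar>Y x\<bar> powr r \<partial>M)"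
proof -
  have ip: "integrable M (\<lambda>x. phi r (X x) * Y x)" using integrable_phi_mult[OF r(1) m i] .
  have ib: "integrable M (\<lambda>x. \<bar>X x\<bar> powr r + r * (phi r (X x) * Y x) + 17 * \<bar>Y x\<bar> powr r)"
    using i ip by auto
  have pt: "\<bar>X x + Y x\<bar> powr r \<le> \<bar>X x\<bar> powr r + r * (phi r (X x) * Y x) + 17 * \<bar>Y x\<bar> powr r" for x
    using ineq_main[OF r, of "X x" "Y x"] by (simp add: mult.assoc)
  show int: "integrable M (\<lambda>x. \<bar>X x + Y x\<bar> powr r)"
  proof (rule Bochner_Integration.integrable_bound[OF ib])
    show "(\<lambda>x. \<bar>X x + Y x\<bar> powr r) \<in> borel_measurable M" using m by measurable
    show "AE x in M. norm (\<bar>X x + Y x\<bar> powr r) \<le> norm (\<bar>X x\<bar> powr r + r * (phi r (X x) * Y x) + 17 * \<bar>Y x\<bar> powr r)"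
      using pt by (auto intro!: AE_I2) (smt (verit) powr_ge_zero)
  qed
  have "(\<integral>x. \<bar>X x + Y x\<bar> powr r \<partial>M) \<le> (\<integral>x. \<bar>X x\<bar> powr r + r * (phi r (X x) * Y x) + 17 * \<bar>Y x\<bar> powr r \<partial>M)"
    by (intro integral_mono int ib pt)
  also have "\<dots> = (\<integral>x. \<bar>X x\<bar> powr r \<partial>M) + r * (\<integral>x. phi r (X x) * Y x \<partial>M) + 17 * (\<integral>x. \<bar>Y x\<bar> powr r \<partial>M)"
    using i ip by simp
  finally show "(\<integral>x. \<bar>X x + Y x\<bar> powr r \<partial>M) \<le> (\<integral>x. \<bar>X x\<bar> powr r \<partial>M) + 17 * (\<integral>x. \<bar>Y x\<bar> powr r \<partial>M)"
    using o by simp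
qed

lemma (in prob_space) chain:
  fixes S0 :: "'a \<Rightarrow> real" and T :: "'i \<Rightarrow> 'a \<Rightarrow> real"
  assumes r: "1 < r" "r \<le> 2" and fin: "finite R"
    and S0: "S0 \<in> borel_measurable M" "integrable M (\<lambda>x. \<bar>S0 x\<bar> powr r)"
  shows "(\<forall>s\<in>R. T s \<in> borel_measurable M \<and> integrable M (\<lambda>x. \<bar>T s x\<bar> powr r)) \<longrightarrow>
    (\<forall>R' s. R' \<subseteq> R \<longrightarrow> s \<in> R \<longrightarrow> s \<notin> R' \<longrightarrow> integrable M (\<lambda>x. \<bar>S0 x + (\<Sum>t\<in>R'. T t x)\<bar> powr r) \<longrightarrow>
        (\<integral>x. phi r (S0 x + (\<Sum>t\<in>R'. T t x)) * T s x \<partial>M) = 0) \<longrightarrow>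
    integrable M (\<lambda>x. \<bar>S0 x + (\<Sum>t\<in>R. T t x)\<bar> powr r) \<and>
    (\<integral>x. \<bar>S0 x + (\<Sum>t\<in>R. T t x)\<bar> powr r \<partial>M) \<le> (\<integral>x. \<bar>S0 x\<bar> powr r \<partial>M) + 17 * (\<Sum>t\<in>R. \<integral>x. \<bar>T t x\<bar> powr r \<partial>M)"
  using fin
proof (induction R rule: finite_induct)
  case empty
  then show ?case using S0 by simp
next
  case (insert a F)
  show ?case
  proof (intro impI)
    assume T: "\<forall>s\<in>insert a F. T s \<in> borel_measurable M \<and> integrable M (\<lambda>x. \<bar>T s x\<bar> powr r)"
      and O: "\<forall>R' s. R' \<subseteq> insert a F \<longrightarrow> s \<in> insert a F \<longrightarrow> s \<notin> R' \<longrightarrow> integrable M (\<lambda>x. \<bar>S0 x + (\<Sum>t\<in>R'. T t x)\<bar> powr r) \<longrightarrow>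
        (\<integral>x. phi r (S0 x + (\<Sum>t\<in>R'. T t x)) * T s x \<partial>M) = 0"
    have IH: "integrable M (\<lambda>x. \<bar>S0 x + (\<Sum>t\<in>F. T t x)\<bar> powr r) \<and>
      (\<integral>x. \<bar>S0 x + (\<Sum>t\<in>F. T t x)\<bar> powr r \<partial>M) \<le> (\<integral>x. \<bar>S0 x\<bar> powr r \<partial>M) + 17 * (\<Sum>t\<in>F. \<integral>x. \<bar>T t x\<bar> powr r \<partial>M)"
      using insert.IH T O by blast
    have mX: "(\<lambda>x. S0 x + (\<Sum>t\<in>F. T t x)) \<in> borel_measurable M" using S0 T by (intro borel_measurable_add borel_measurable_sum) auto
    have o: "(\<integral>x. phi r (S0 x + (\<Sum>t\<in>F. T t x)) * T a x \<partial>M) = 0"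
      using O IH insert.hyps by blast
    note s2 = step2[OF r mX _ conjunct1[OF IH] _ o]
    have eq: "S0 x + (\<Sum>t\<in>insert a F. T t x) = (S0 x + (\<Sum>t\<in>F. T t x)) + T a x" for x
      using insert.hyps by simp
    show "integrable M (\<lambda>x. \<bar>S0 x + (\<Sum>t\<in>insert a F. T t x)\<bar> powr r) \<and>
      (\<integral>x. \<bar>S0 x + (\<Sum>t\<in>insert a F. T t x)\<bar> powr r \<partial>M) \<le> (\<integral>x. \<bar>S0 x\<bar> powr r \<partial>M) + 17 * (\<Sum>t\<in>insert a F. \<integral>x. \<bar>T t x\<bar> powr r \<partial>M)"
      unfolding eq using s2 T IH insert.hyps by (auto simp: algebra_simps)
  qed
qed




locale casc = prob_space M
  for M :: "'a measure" +
  fixes W Z :: "'a \<Rightarrow> real"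
    and Wf Zf :: "nat \<Rightarrow> bool list \<Rightarrow> 'a \<Rightarrow> real"
    and p \<epsilon> :: real
  assumes W_rv: "W \<in> borel_measurable M"
    and W_pos: "AE x in M. W x > 0"
    and W_mean: "integral\<^sup>L M W = 1"
    and W_moments: "\<And>q::real. integrable M (\<lambda>x. W x powr q)"
    and Wf_rv: "\<And>m r. r \<noteq> [] \<Longrightarrow> Wf m r \<in> borel_measurable M"
    and Wf_law: "\<And>m r. r \<noteq> [] \<Longrightarrow> distr M borel (Wf m r) = distr M borel W"
    and Wf_indep: "indep_vars (\<lambda>_. borel) (\<lambda>(m, r). Wf m r) {(m, r). r \<noteq> []}"
    and Z_rv: "Z \<in> borel_measurable M"
    and Zf_meas: "\<And>m r. measurable_wrt M (Zf m r) (\<lambda>r'. Wf m (r @ r')) {r'. r' \<noteq> []}"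
    and Zf_law: "\<And>m r. distr M borel (Zf m r) = distr M borel Z"
    and eps: "0 < \<epsilon>" "\<epsilon> \<le> 1"
    and Z_mom: "integrable M (\<lambda>x. \<bar>Z x\<bar> powr (1 + \<epsilon>))"
begin

definition Gen :: "nat \<Rightarrow> bool list \<Rightarrow> 'a set set" where
  "Gen m w = {Wf m w -` B \<inter> space M | B. B \<in> sets borel}"

definition FM :: "nat \<Rightarrow> bool list set \<Rightarrow> 'a measure" where
  "FM m A = sigma (space M) (\<Union>w\<in>A. Gen m w)"

definition NE :: "bool list set" where "NE = {w. w \<noteq> []}"

lemma Gen_Pow: "(\<Union>w\<in>A. Gen m w) \<subseteq> Pow (space M)"
  by (auto simp: Gen_def)

lemma sets_FM: "sets (FM m A) = sigma_sets (space M) (\<Union>w\<in>A. Gen m w)"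
  unfolding FM_def using Gen_Pow by (rule sets_measure_of)

lemma space_FM[simp]: "space (FM m A) = space M"
  unfolding FM_def using Gen_Pow by (rule space_measure_of)

lemma sets_FM_sub: assumes "A \<subseteq> NE" shows "sets (FM m A) \<subseteq> sets M"
  unfolding sets_FM
proof (rule sets.sigma_sets_subset)
  show "(\<Union>w\<in>A. Gen m w) \<subseteq> sets M"
    using assms Wf_rv unfolding Gen_def NE_def by (auto simp: measurable_sets)
qed

lemma FM_meas: assumes "A \<subseteq> NE" "f \<in> borel_measurable (FM m A)"
  shows "f \<in> borel_measurable M"
  using assms sets_FM_sub[OF assms(1)] unfolding measurable_def by auto

lemma FM_mono: assumes "A \<subseteq> B" "f \<in> borel_measurable (FM m A)"
  shows "f \<in> borel_measurable (FM m B)"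
proof -
  have "sets (FM m A) \<subseteq> sets (FM m B)" unfolding sets_FM
    using assms(1) by (intro sigma_sets_mono') auto
  then show ?thesis using assms(2) unfolding measurable_def by auto
qed

lemma Wf_FM: assumes "w \<in> A" shows "Wf m w \<in> borel_measurable (FM m A)"
proof (rule measurableI)
  fix B :: "real set" assume "B \<in> sets borel"
  then have "Wf m w -` B \<inter> space M \<in> (\<Union>w\<in>A. Gen m w)" using assms unfolding Gen_def by auto
  then show "Wf m w -` B \<inter> space (FM m A) \<in> sets (FM m A)" unfolding sets_FM by auto
qed auto

definition ext :: "bool list \<Rightarrow> bool list set" where
  "ext r = {r @ v | v. v \<noteq> []}"

lemma ext_NE: "ext r \<subseteq> NE" by (auto simp: ext_def NE_def)

lemma Zf_FM: "Zf m r \<in> borel_measurable (FM m (ext r))"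
proof (rule measurableI)
  fix B :: "real set" assume B: "B \<in> sets borel"
  have eq: "(\<Union>i\<in>{r'. r' \<noteq> []}. {(\<lambda>r'. Wf m (r @ r')) i -` B \<inter> space M |B. B \<in> sets borel})
     = (\<Union>w\<in>ext r. Gen m w)" unfolding ext_def Gen_def by blast
  show "Zf m r -` B \<inter> space (FM m (ext r)) \<in> sets (FM m (ext r))"
    using Zf_meas[of m r] B unfolding measurable_wrt_def sets_FM eq by auto
qed auto

lemma indep_FM_sets:
  assumes AB: "A \<inter> B = {}" "A \<subseteq> NE" "B \<subseteq> NE"
  shows "indep_sets (\<lambda>b. sigma_sets (space M) (\<Union>w\<in>(if b then A else B). Gen m w)) UNIV"
proof -
  define E where "E i = {(\<lambda>(m, r). Wf m r) i -` C \<inter> space M | C. C \<in> sets borel}" for i :: "nat \<times> bool list"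
  define I where "I b = (\<lambda>w. (m, w)) ` (if b then A else B)" for b
  have ind: "indep_sets E {(m, r). r \<noteq> []}" using Wf_indep unfolding indep_vars_def2 E_def by auto
  have "indep_sets (\<lambda>j. sigma_sets (space M) (\<Union>i\<in>I j. E i)) UNIV"
  proof (rule indep_sets_collect_sigma)
    show "indep_sets E (\<Union>j\<in>UNIV. I j)"
      by (rule indep_sets_mono_index[OF _ ind]) (use AB in \<open>auto simp: I_def NE_def split: if_splits\<close>)
  next
    fix i j assume "j \<in> (UNIV::bool set)" "i \<in> I j"
    show "Int_stable (E i)"
      unfolding E_def
      apply (auto simp: Int_stable_def)
      apply (rule_tac x="C \<inter> Ca" in exI)
      apply auto
      done
  next
    show "disjoint_family_on I UNIV"
      using AB by (auto simp: disjoint_family_on_def I_def)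
  qed
  moreover have "(\<Union>i\<in>I j. E i) = (\<Union>w\<in>(if j then A else B). Gen m w)" for j
    unfolding I_def E_def Gen_def by auto
  ultimately show ?thesis by simp
qed

lemma indep_FM:
  fixes X Y :: "'a \<Rightarrow> real"
  assumes AB: "A \<inter> B = {}" "A \<subseteq> NE" "B \<subseteq> NE"
    and X: "X \<in> borel_measurable (FM m A)" and Y: "Y \<in> borel_measurable (FM m B)"
  shows "indep_var borel X borel Y"
proof -
  have mX: "X \<in> borel_measurable M" using FM_meas[OF AB(2) X] .
  have mY: "Y \<in> borel_measurable M" using FM_meas[OF AB(3) Y] .
  show ?thesis
    unfolding indep_var_def indep_vars_def2
  proof (intro conjI ballI)
    fix i :: bool show "random_variable (case_bool borel borel i) (case_bool X Y i)"
      using mX mY by (cases i) auto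
  next
    show "indep_sets (\<lambda>i. {case_bool X Y i -` C \<inter> space M |C. C \<in> sets (case_bool borel borel i)}) UNIV"
    proof (rule indep_sets_mono_sets[OF indep_FM_sets[OF AB]])
      fix i :: bool
      show "{case_bool X Y i -` C \<inter> space M |C. C \<in> sets (case_bool borel borel i)}
        \<subseteq> sigma_sets (space M) (\<Union>w\<in>(if i then A else B). Gen m w)"
        using measurable_sets[OF X] measurable_sets[OF Y] unfolding sets_FM
        by (cases i) auto
    qed
  qed
qed

lemma indep_FM_integral:
  fixes X Y :: "'a \<Rightarrow> real"
  assumes AB: "A \<inter> B = {}" "A \<subseteq> NE" "B \<subseteq> NE"
    and X: "X \<in> borel_measurable (FM m A)" and Y: "Y \<in> borel_measurable (FM m B)"
    and iX: "integrable M X" and iY: "integrable M Y"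
  shows "integrable M (\<lambda>x. X x * Y x)" "(\<integral>x. X x * Y x \<partial>M) = (\<integral>x. X x \<partial>M) * (\<integral>x. Y x \<partial>M)"
  using indep_var_integrable[OF indep_FM[OF AB X Y] iX iY]
    indep_var_lebesgue_integral[OF indep_FM[OF AB X Y] iX iY] by auto

end



lemma words_finite: "finite {w::bool list. length w = n}"
  using finite_lists_length_eq[of "UNIV::bool set" n] by simp

lemma words_card: "card {w::bool list. length w = n} = 2^n"
  using card_lists_length_eq[of "UNIV::bool set" n] by simp

lemma sum_words_Suc:
  fixes f :: "bool list \<Rightarrow> 'b::comm_monoid_add"
  shows "(\<Sum>w\<in>{w. length w = Suc k}. f w) = (\<Sum>s\<in>{s. length s = k}. f (s @ [False]) + f (s @ [True]))"
proof -
  let ?L = "{s::bool list. length s = k}"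
  have eq: "{w::bool list. length w = Suc k} = (\<lambda>s. s @ [False]) ` ?L \<union> (\<lambda>s. s @ [True]) ` ?L"
  proof (intro set_eqI iffI)
    fix w :: "bool list" assume "w \<in> {w. length w = Suc k}"
    then have "w \<noteq> []" by auto
    then have "w = butlast w @ [last w]" "length (butlast w) = k"
      using \<open>w \<in> _\<close> by auto
    then obtain s b where "w = s @ [b]" "length s = k" by blast
    then show "w \<in> (\<lambda>s. s @ [False]) ` ?L \<union> (\<lambda>s. s @ [True]) ` ?L" by (cases b) auto
  qed auto
  have d: "(\<lambda>s. s @ [False]) ` ?L \<inter> (\<lambda>s. s @ [True]) ` ?L = {}" by auto
  have "(\<Sum>w\<in>{w. length w = Suc k}. f w) = (\<Sum>w\<in>(\<lambda>s. s @ [False]) ` ?L. f w) + (\<Sum>w\<in>(\<lambda>s. s @ [True]) ` ?L. f w)"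
    unfolding eq by (rule sum.union_disjoint) (use d words_finite in auto)
  also have "\<dots> = (\<Sum>s\<in>?L. f (s @ [False])) + (\<Sum>s\<in>?L. f (s @ [True]))"
    by (subst (1 2) sum.reindex) (auto simp: inj_on_def)
  finally show ?thesis by (simp add: sum.distrib)
qed

context casc begin

definition Q :: "nat \<Rightarrow> bool list \<Rightarrow> real \<Rightarrow> 'a \<Rightarrow> real" where
  "Q m s a x = (\<Prod>i\<in>{1..length s}. Wf m (take i s) x powr a)"

definition L :: "nat \<Rightarrow> bool list set" where
  "L k = {w. w \<noteq> [] \<and> length w \<le> k}"

definition EW :: "real \<Rightarrow> real" where
  "EW a = (\<integral>x. W x powr a \<partial>M)"

lemma L_NE: "L k \<subseteq> NE" by (auto simp: L_def NE_def)

lemma Q_snoc: "Q m (s @ [b]) a x = Q m s a x * Wf m (s @ [b]) x powr a"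
proof -
  have "{1..length (s @ [b])} = insert (Suc (length s)) {1..length s}" by auto
  moreover have "(\<Prod>i\<in>{1..length s}. Wf m (take i (s @ [b])) x powr a) = (\<Prod>i\<in>{1..length s}. Wf m (take i s) x powr a)"
    by (intro prod.cong) auto
  ultimately show ?thesis unfolding Q_def by (simp add: mult.commute)
qed

lemma Q_Nil[simp]: "Q m [] a x = 1" by (simp add: Q_def)

lemma Q_FM: "Q m s a \<in> borel_measurable (FM m (L (length s)))"
  unfolding Q_def
proof (intro borel_measurable_prod powr_real_measurable)
  fix i assume "i \<in> {1..length s}"
  then show "Wf m (take i s) \<in> borel_measurable (FM m (L (length s)))"
    by (intro Wf_FM) (auto simp: L_def)
qed auto

lemma Wf_mom: assumes "w \<noteq> []"
  shows "integrable M (\<lambda>x. Wf m w x powr a)" "(\<integral>x. Wf m w x powr a \<partial>M) = EW a"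
proof -
  have mW: "Wf m w \<in> borel_measurable M" using Wf_rv assms .
  have f: "(\<lambda>y::real. y powr a) \<in> borel_measurable borel" by measurable
  have "integrable (distr M borel (Wf m w)) (\<lambda>y. y powr a)"
    unfolding Wf_law[OF assms] using W_moments[of a] integrable_distr_eq[OF W_rv f] by simp
  then show "integrable M (\<lambda>x. Wf m w x powr a)" using integrable_distr_eq[OF mW f] by simp
  have "(\<integral>x. Wf m w x powr a \<partial>M) = integral\<^sup>L (distr M borel (Wf m w)) (\<lambda>y. y powr a)"
    using integral_distr[OF mW f] by simp
  also have "\<dots> = integral\<^sup>L (distr M borel W) (\<lambda>y. y powr a)" unfolding Wf_law[OF assms] ..
  also have "\<dots> = EW a" unfolding EW_def using integral_distr[OF W_rv f] by simp
  finally show "(\<integral>x. Wf m w x powr a \<partial>M) = EW a" .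
qed

lemma Q_mom: "integrable M (Q m s a) \<and> (\<integral>x. Q m s a x \<partial>M) = EW a ^ length s"
proof (induction s rule: rev_induct)
  case Nil then show ?case by (simp add: prob_space)
next
  case (snoc b s)
  have d: "L (length s) \<inter> {s @ [b]} = {}" by (auto simp: L_def)
  have s: "{s @ [b]} \<subseteq> NE" by (auto simp: NE_def)
  have fn: "(\<lambda>x. Q m s a x * Wf m (s @ [b]) x powr a) = Q m (s @ [b]) a" by (simp add: Q_snoc fun_eq_iff)
  have m2: "(\<lambda>x. Wf m (s @ [b]) x powr a) \<in> borel_measurable (FM m {s @ [b]})"
    using Wf_FM[of "s@[b]" "{s@[b]}" m] by (intro powr_real_measurable) auto
  note I = indep_FM_integral[OF d L_NE s Q_FM m2 conjunct1[OF snoc.IH] Wf_mom(1)]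
  show ?case using I Wf_mom(2)[of "s@[b]" m a] snoc.IH unfolding fn by simp
qed

end



lemma three_powr:
  fixes a b c r :: real
  assumes r: "1 < r" "r \<le> 2"
  shows "\<bar>a + b - c\<bar> powr r \<le> 9 * (\<bar>a\<bar> powr r + \<bar>b\<bar> powr r + \<bar>c\<bar> powr r)"
proof -
  define N where "N = max \<bar>a\<bar> (max \<bar>b\<bar> \<bar>c\<bar>)"
  have "\<bar>a + b - c\<bar> \<le> 3 * N" unfolding N_def by auto
  then have "\<bar>a + b - c\<bar> powr r \<le> (3 * N) powr r" using r by (intro powr_mono2) auto
  also have "\<dots> = 3 powr r * N powr r" using N_def by (simp add: powr_mult)
  also have "\<dots> \<le> 9 * N powr r"
  proof -
    have "3 powr r \<le> 3 powr (2::real)" using r by (intro powr_mono) auto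
    then show ?thesis by (intro mult_right_mono) (auto simp: powr_numeral)
  qed
  also have "N powr r \<le> \<bar>a\<bar> powr r + \<bar>b\<bar> powr r + \<bar>c\<bar> powr r"
    unfolding N_def by (auto simp: max_def) 
  finally show ?thesis by simp
qed

context casc begin

abbreviation rr :: real where "rr \<equiv> 1 + \<epsilon>"

lemma rr: "1 < rr" "rr \<le> 2" using eps by auto

lemma Q_nonneg: "0 \<le> Q m s a x" unfolding Q_def by (intro prod_nonneg) auto

lemma Q_powr: "Q m s a x powr b = Q m s (a*b) x"
  unfolding Q_def prod_powr_distrib powr_powr ..

lemma Q_r: "integrable M (\<lambda>x. \<bar>Q m s p x\<bar> powr rr)" "(\<integral>x. \<bar>Q m s p x\<bar> powr rr \<partial>M) = EW (p*rr) ^ length s"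
  using Q_mom[of m s "p*rr"] by (simp_all add: Q_nonneg Q_powr)

lemma Q_meas: "Q m s a \<in> borel_measurable M"
  using FM_meas[OF L_NE Q_FM] .

definition e :: real where "e = EW p"
definition mu :: real where "mu = (\<integral>x. Z x \<partial>M)"

definition U :: "nat \<Rightarrow> bool list \<Rightarrow> 'a \<Rightarrow> real" where
  "U m s x = Wf m (s @ [False]) x powr p + Wf m (s @ [True]) x powr p - 2 * e"

definition C :: "bool list \<Rightarrow> bool list set" where
  "C s = {s @ [False], s @ [True]}"

lemma C_NE: "C s \<subseteq> NE" by (auto simp: C_def NE_def)

lemma U_FM: "U m s \<in> borel_measurable (FM m (C s))"
  unfolding U_def using Wf_FM[of "s @ [False]" "C s" m] Wf_FM[of "s @ [True]" "C s" m]
  by (intro borel_measurable_diff borel_measurable_add powr_real_measurable) (auto simp: C_def)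

lemma U_meas: "U m s \<in> borel_measurable M" using FM_meas[OF C_NE U_FM] .

lemma U_int: "integrable M (U m s)" "(\<integral>x. U m s x \<partial>M) = 0"
proof -
  have i1: "integrable M (\<lambda>x. Wf m (s @ [False]) x powr p)" by (rule Wf_mom) simp
  have i2: "integrable M (\<lambda>x. Wf m (s @ [True]) x powr p)" by (rule Wf_mom) simp
  show "integrable M (U m s)" unfolding U_def using i1 i2 by auto
  show "(\<integral>x. U m s x \<partial>M) = 0" unfolding U_def using i1 i2 Wf_mom(2)[of "s @ [False]" m p] Wf_mom(2)[of "s @ [True]" m p]
    by (simp add: e_def prob_space)
qed

definition KU :: real where "KU = 9 * (2 * EW (p * rr) + \<bar>2 * e\<bar> powr rr)"

lemma U_r: "integrable M (\<lambda>x. \<bar>U m s x\<bar> powr rr)" "(\<integral>x. \<bar>U m s x\<bar> powr rr \<partial>M) \<le> KU"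
proof -
  have i1: "integrable M (\<lambda>x. Wf m (s @ [False]) x powr (p*rr))" by (rule Wf_mom) simp
  have i2: "integrable M (\<lambda>x. Wf m (s @ [True]) x powr (p*rr))" by (rule Wf_mom) simp
  define B where "B x = 9 * (Wf m (s @ [False]) x powr (p*rr) + Wf m (s @ [True]) x powr (p*rr) + \<bar>2 * e\<bar> powr rr)" for x
  have iB: "integrable M B" unfolding B_def using i1 i2 by auto
  have pt: "\<bar>U m s x\<bar> powr rr \<le> B x" for x
    unfolding U_def B_def using three_powr[OF rr, of "Wf m (s @ [False]) x powr p" "Wf m (s @ [True]) x powr p" "2*e"]
    by (simp add: powr_powr)
  show int: "integrable M (\<lambda>x. \<bar>U m s x\<bar> powr rr)"
    by (rule Bochner_Integration.integrable_bound[OF iB]) (use pt U_meas in \<open>auto intro!: AE_I2 intro: order.trans[OF _ abs_ge_self]\<close>)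
  have "(\<integral>x. \<bar>U m s x\<bar> powr rr \<partial>M) \<le> integral\<^sup>L M B" by (intro integral_mono int iB pt)
  also have "\<dots> = KU" unfolding B_def KU_def using i1 i2 Wf_mom(2)[of "s @ [False]" m "p*rr"] Wf_mom(2)[of "s @ [True]" m "p*rr"]
    by (simp add: prob_space)
  finally show "(\<integral>x. \<bar>U m s x\<bar> powr rr \<partial>M) \<le> KU" .
qed

end



lemma abs_le_powr: "1 \<le> r \<Longrightarrow> \<bar>y::real\<bar> \<le> 1 + \<bar>y\<bar> powr r"
proof (cases "\<bar>y\<bar> \<le> 1")
  case False
  assume r: "1 \<le> r"
  have "\<bar>y\<bar> = \<bar>y\<bar> powr 1" using False by simp
  also have "\<dots> \<le> \<bar>y\<bar> powr r" using False r by (intro powr_mono) auto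
  finally show ?thesis by simp
qed (simp add: add_increasing2)

context casc begin

lemma Zf_rv: "Zf m r \<in> borel_measurable M" using FM_meas[OF ext_NE Zf_FM] .

lemma Zf_transfer:
  fixes f :: "real \<Rightarrow> real"
  assumes f: "f \<in> borel_measurable (borel :: real measure)"
  shows "integrable M (\<lambda>x. f (Zf m r x)) \<longleftrightarrow> integrable M (\<lambda>x. f (Z x))"
    "(\<integral>x. f (Zf m r x) \<partial>M) = (\<integral>x. f (Z x) \<partial>M)"
proof -
  show "integrable M (\<lambda>x. f (Zf m r x)) \<longleftrightarrow> integrable M (\<lambda>x. f (Z x))"
    using integrable_distr_eq[OF Zf_rv[of m r] f] integrable_distr_eq[OF Z_rv f] Zf_law[of m r] by simp
  show "(\<integral>x. f (Zf m r x) \<partial>M) = (\<integral>x. f (Z x) \<partial>M)"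
    using integral_distr[OF Zf_rv[of m r] f] integral_distr[OF Z_rv f] Zf_law[of m r] by simp
qed

lemma Z_int: "integrable M Z"
proof (rule Bochner_Integration.integrable_bound)
  show "integrable M (\<lambda>x. 1 + \<bar>Z x\<bar> powr rr)" using Z_mom by auto
  show "AE x in M. norm (Z x) \<le> norm (1 + \<bar>Z x\<bar> powr rr)"
    using abs_le_powr[of rr] rr by (auto intro!: AE_I2)
qed (rule Z_rv)

definition KZ :: real where "KZ = (\<integral>x. \<bar>Z x - mu\<bar> powr rr \<partial>M)"

lemma Zc_r: "integrable M (\<lambda>x. \<bar>Z x - mu\<bar> powr rr)"
proof (rule Bochner_Integration.integrable_bound)
  show "integrable M (\<lambda>x. 9 * (\<bar>Z x\<bar> powr rr + \<bar>0\<bar> powr rr + \<bar>mu\<bar> powr rr))" using Z_mom by auto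
  show "AE x in M. norm (\<bar>Z x - mu\<bar> powr rr) \<le> norm (9 * (\<bar>Z x\<bar> powr rr + \<bar>0\<bar> powr rr + \<bar>mu\<bar> powr rr))"
    using three_powr[OF rr, of _ 0 mu] by (auto intro!: AE_I2)
qed (use Z_rv in measurable)

lemma Zfc: "integrable M (\<lambda>x. Zf m r x - mu)" "(\<integral>x. Zf m r x - mu \<partial>M) = 0"
    "integrable M (\<lambda>x. \<bar>Zf m r x - mu\<bar> powr rr)" "(\<integral>x. \<bar>Zf m r x - mu\<bar> powr rr \<partial>M) = KZ"
proof -
  have i: "integrable M (Zf m r)" using Zf_transfer(1)[of "\<lambda>y. y" m r] Z_int by simp
  show "integrable M (\<lambda>x. Zf m r x - mu)" using i by auto
  show "(\<integral>x. Zf m r x - mu \<partial>M) = 0" using i Zf_transfer(2)[of "\<lambda>y. y" m r]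
    by (simp add: mu_def prob_space)
  have f: "(\<lambda>y. \<bar>y - mu\<bar> powr rr) \<in> borel_measurable (borel :: real measure)" by measurable
  show "integrable M (\<lambda>x. \<bar>Zf m r x - mu\<bar> powr rr)" using Zf_transfer(1)[OF f] Zc_r by simp
  show "(\<integral>x. \<bar>Zf m r x - mu\<bar> powr rr \<partial>M) = KZ" using Zf_transfer(2)[OF f] KZ_def by simp
qed

definition cY :: "nat \<Rightarrow> nat \<Rightarrow> real" where
  "cY j k = 2 powr (- real j * p) * (2*e)^(j-k) * mu"

definition Yk :: "nat \<Rightarrow> nat \<Rightarrow> nat \<Rightarrow> 'a \<Rightarrow> real" where
  "Yk m j k x = cY j k * (\<Sum>s\<in>{s. length s = k}. Q m s p x)"

definition Tl :: "nat \<Rightarrow> nat \<Rightarrow> nat \<Rightarrow> bool list \<Rightarrow> 'a \<Rightarrow> real" where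
  "Tl m j k s x = cY j (Suc k) * Q m s p x * U m s x"

definition Tz :: "nat \<Rightarrow> nat \<Rightarrow> bool list \<Rightarrow> 'a \<Rightarrow> real" where
  "Tz m j r x = 2 powr (- real j * p) * Q m r p x * (Zf m r x - mu)"

lemma Yk_step: assumes "k < j"
  shows "Yk m j (Suc k) x = Yk m j k x + (\<Sum>s\<in>{s. length s = k}. Tl m j k s x)"
proof -
  have c: "cY j k = cY j (Suc k) * (2*e)"
  proof -
    have "j - k = Suc (j - Suc k)" using assms by simp
    then show ?thesis unfolding cY_def by simp
  qed
  have "(\<Sum>w\<in>{w. length w = Suc k}. Q m w p x) = (\<Sum>s\<in>{s. length s = k}. Q m s p x * U m s x + (2*e) * Q m s p x)"
    unfolding sum_words_Suc Q_snoc U_def by (intro sum.cong) (auto simp: algebra_simps)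
  then show ?thesis unfolding Yk_def Tl_def c
    by (simp add: sum.distrib sum_distrib_left algebra_simps)
qed

lemma casc_decomp:
  "cascM Wf Zf m j p x = Yk m j j x + (\<Sum>r\<in>{r. length r = j}. Tz m j r x)"
  unfolding cascM_def Yk_def Tz_def cY_def Q_def
  by (simp add: sum_distrib_left sum.distrib[symmetric] algebra_simps)

lemma Yk0: "Yk m j 0 x = cY j 0"
proof -
  have "{s::bool list. length s = 0} = {[]}" by auto
  then show ?thesis unfolding Yk_def by simp
qed

end



context casc begin

lemma EW_nonneg: "0 \<le> EW a" unfolding EW_def by (intro integral_nonneg_AE) auto

lemma Yk_FM: "Yk m j k \<in> borel_measurable (FM m (L k))"
  unfolding Yk_def
  by (intro borel_measurable_times borel_measurable_const borel_measurable_sum)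
     (use Q_FM in \<open>auto\<close>)

lemma Tl_r: "length s = k \<Longrightarrow> Tl m j k s \<in> borel_measurable M \<and> integrable M (\<lambda>x. \<bar>Tl m j k s x\<bar> powr rr) \<and>
   (\<integral>x. \<bar>Tl m j k s x\<bar> powr rr \<partial>M) \<le> \<bar>cY j (Suc k)\<bar> powr rr * EW (p*rr) ^ k * KU"
proof -
  assume len: "length s = k"
  have d: "L k \<inter> C s = {}" using len by (auto simp: L_def C_def)
  have m1: "(\<lambda>x. \<bar>Q m s p x\<bar> powr rr) \<in> borel_measurable (FM m (L k))" using Q_FM[of m s p] len by (intro measurable_abs_powr) auto
  have m2: "(\<lambda>x. \<bar>U m s x\<bar> powr rr) \<in> borel_measurable (FM m (C s))" using U_FM[of m s] by (intro measurable_abs_powr) auto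
  note I = indep_FM_integral[OF d L_NE C_NE m1 m2 Q_r(1) U_r(1)]
  have eq: "\<bar>Tl m j k s x\<bar> powr rr = \<bar>cY j (Suc k)\<bar> powr rr * (\<bar>Q m s p x\<bar> powr rr * \<bar>U m s x\<bar> powr rr)" for x
    unfolding Tl_def by (simp add: abs_mult powr_mult)
  have "Tl m j k s \<in> borel_measurable M" unfolding Tl_def using Q_meas U_meas by measurable
  moreover have "integrable M (\<lambda>x. \<bar>Tl m j k s x\<bar> powr rr)" unfolding eq using I(1) by auto
  moreover have "(\<integral>x. \<bar>Tl m j k s x\<bar> powr rr \<partial>M) \<le> \<bar>cY j (Suc k)\<bar> powr rr * EW (p*rr) ^ k * KU"
  proof -
    have "(\<integral>x. \<bar>Tl m j k s x\<bar> powr rr \<partial>M) = \<bar>cY j (Suc k)\<bar> powr rr * (EW (p*rr) ^ k * (\<integral>x. \<bar>U m s x\<bar> powr rr \<partial>M))"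
      unfolding eq using I(2) Q_r(2)[of m s] len by simp
    also have "\<dots> \<le> \<bar>cY j (Suc k)\<bar> powr rr * (EW (p*rr) ^ k * KU)"
      using U_r(2)[of m s] EW_nonneg by (intro mult_left_mono) auto
    finally show ?thesis by (simp add: mult.assoc)
  qed
  ultimately show ?thesis by blast
qed

lemma Tl_orth:
  assumes R': "R' \<subseteq> {s. length s = k}" and s: "length s = k" "s \<notin> R'"
    and iX: "integrable M (\<lambda>x. \<bar>Yk m j k x + (\<Sum>t\<in>R'. Tl m j k t x)\<bar> powr rr)"
  shows "(\<integral>x. phi rr (Yk m j k x + (\<Sum>t\<in>R'. Tl m j k t x)) * Tl m j k s x \<partial>M) = 0"
proof -
  define B where "B = L k \<union> (\<Union>t\<in>R'. C t)"
  have BNE: "B \<subseteq> NE" unfolding B_def using L_NE C_NE by auto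
  have nB: "w \<notin> B" if w0: "w \<in> C s" for w
  proof -
    from w0 obtain b where w: "w = s @ [b]" by (auto simp: C_def)
    have "w \<notin> L k" using w s by (auto simp: L_def)
    moreover have "w \<notin> C t" if t: "t \<in> R'" for t
    proof
      assume "w \<in> C t"
      then obtain b' where "s @ [b] = t @ [b']" using w by (auto simp: C_def)
      then have "s = t" by simp
      then show False using t s by simp
    qed
    ultimately show ?thesis unfolding B_def by blast
  qed
  have d: "B \<inter> C s = {}" using nB by blast
  define X where "X x = Yk m j k x + (\<Sum>t\<in>R'. Tl m j k t x)" for x
  have LB: "L k \<subseteq> B" unfolding B_def by auto
  have XB: "X \<in> borel_measurable (FM m B)"
    unfolding X_def Tl_def
  proof (intro borel_measurable_add borel_measurable_sum borel_measurable_times borel_measurable_const)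
    show "Yk m j k \<in> borel_measurable (FM m B)" by (rule FM_mono[OF LB Yk_FM])
  next
    fix t assume t: "t \<in> R'"
    have lt: "length t = k" using R' t by auto
    have CB: "C t \<subseteq> B" unfolding B_def using t by blast
    have QL: "Q m t p \<in> borel_measurable (FM m (L k))" using Q_FM[of m t p] lt by simp
    show "Q m t p \<in> borel_measurable (FM m B)" by (rule FM_mono[OF LB QL])
    show "U m t \<in> borel_measurable (FM m B)" by (rule FM_mono[OF CB U_FM])
  qed
  have QL: "Q m s p \<in> borel_measurable (FM m (L k))" using Q_FM[of m s p] s(1) by simp
  have QB: "Q m s p \<in> borel_measurable (FM m B)" by (rule FM_mono[OF LB QL])
  have Y1B: "(\<lambda>x. phi rr (X x) * Q m s p x) \<in> borel_measurable (FM m B)"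
    using XB QB by (intro borel_measurable_times borel_measurable_phi)
  have iY1: "integrable M (\<lambda>x. phi rr (X x) * Q m s p x)"
    using integrable_phi_mult[OF rr(1) FM_meas[OF BNE XB] Q_meas iX[folded X_def] Q_r(1)] .
  have "(\<integral>x. (phi rr (X x) * Q m s p x) * U m s x \<partial>M) = (\<integral>x. phi rr (X x) * Q m s p x \<partial>M) * (\<integral>x. U m s x \<partial>M)"
    by (rule indep_FM_integral(2)[OF d BNE C_NE Y1B U_FM iY1 U_int(1)])
  also have "\<dots> = 0" using U_int(2) by simp
  finally have z: "(\<integral>x. (phi rr (X x) * Q m s p x) * U m s x \<partial>M) = 0" .
  have "(\<integral>x. phi rr (X x) * Tl m j k s x \<partial>M) = (\<integral>x. cY j (Suc k) * ((phi rr (X x) * Q m s p x) * U m s x) \<partial>M)"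
    unfolding Tl_def by (intro Bochner_Integration.integral_cong) (simp_all add: mult_ac)
  also have "\<dots> = 0" using z by simp
  finally show ?thesis unfolding X_def .
qed

lemma level_bound: "k \<le> j \<Longrightarrow> integrable M (\<lambda>x. \<bar>Yk m j k x\<bar> powr rr) \<and>
  (\<integral>x. \<bar>Yk m j k x\<bar> powr rr \<partial>M) \<le> \<bar>cY j 0\<bar> powr rr + 17 * (\<Sum>i<k. 2^i * (\<bar>cY j (Suc i)\<bar> powr rr * EW (p*rr) ^ i * KU))"
proof (induction k)
  case 0 then show ?case by (simp add: Yk0 prob_space)
next
  case (Suc k)
  then have kj: "k < j" by simp
  have IH: "integrable M (\<lambda>x. \<bar>Yk m j k x\<bar> powr rr)"
    "(\<integral>x. \<bar>Yk m j k x\<bar> powr rr \<partial>M) \<le> \<bar>cY j 0\<bar> powr rr + 17 * (\<Sum>i<k. 2^i * (\<bar>cY j (Suc i)\<bar> powr rr * EW (p*rr) ^ i * KU))"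
    using Suc kj by auto
  have mY: "Yk m j k \<in> borel_measurable M" using FM_meas[OF L_NE Yk_FM] .
  note ch = chain[OF rr words_finite mY IH(1), where T="Tl m j k"]
  have c: "integrable M (\<lambda>x. \<bar>Yk m j k x + (\<Sum>t\<in>{s. length s = k}. Tl m j k t x)\<bar> powr rr) \<and>
    (\<integral>x. \<bar>Yk m j k x + (\<Sum>t\<in>{s. length s = k}. Tl m j k t x)\<bar> powr rr \<partial>M)
      \<le> (\<integral>x. \<bar>Yk m j k x\<bar> powr rr \<partial>M) + 17 * (\<Sum>t\<in>{s. length s = k}. \<integral>x. \<bar>Tl m j k t x\<bar> powr rr \<partial>M)"
  proof (rule ch[THEN mp, THEN mp])
    show "\<forall>s\<in>{s. length s = k}. Tl m j k s \<in> borel_measurable M \<and> integrable M (\<lambda>x. \<bar>Tl m j k s x\<bar> powr rr)"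
      using Tl_r by blast
    show "\<forall>R' s. R' \<subseteq> {s. length s = k} \<longrightarrow> s \<in> {s. length s = k} \<longrightarrow> s \<notin> R' \<longrightarrow>
       integrable M (\<lambda>x. \<bar>Yk m j k x + (\<Sum>t\<in>R'. Tl m j k t x)\<bar> powr rr) \<longrightarrow>
       (\<integral>x. phi rr (Yk m j k x + (\<Sum>t\<in>R'. Tl m j k t x)) * Tl m j k s x \<partial>M) = 0"
    proof (intro allI impI)
      fix R' s assume a: "R' \<subseteq> {s. length s = k}" "s \<in> {s::bool list. length s = k}" "s \<notin> R'"
        "integrable M (\<lambda>x. \<bar>Yk m j k x + (\<Sum>t\<in>R'. Tl m j k t x)\<bar> powr rr)"
      show "(\<integral>x. phi rr (Yk m j k x + (\<Sum>t\<in>R'. Tl m j k t x)) * Tl m j k s x \<partial>M) = 0"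
        using a by (intro Tl_orth) auto
    qed
  qed
  have sb: "(\<Sum>t\<in>{s. length s = k}. \<integral>x. \<bar>Tl m j k t x\<bar> powr rr \<partial>M) \<le> 2^k * (\<bar>cY j (Suc k)\<bar> powr rr * EW (p*rr) ^ k * KU)"
  proof -
    have "(\<Sum>t\<in>{s. length s = k}. \<integral>x. \<bar>Tl m j k t x\<bar> powr rr \<partial>M) \<le> (\<Sum>t\<in>{s::bool list. length s = k}. \<bar>cY j (Suc k)\<bar> powr rr * EW (p*rr) ^ k * KU)"
      by (intro sum_mono) (use Tl_r in auto)
    also have "\<dots> = 2^k * (\<bar>cY j (Suc k)\<bar> powr rr * EW (p*rr) ^ k * KU)" by (simp add: words_card)
    finally show ?thesis .
  qed
  have eq: "Yk m j (Suc k) x = Yk m j k x + (\<Sum>t\<in>{s. length s = k}. Tl m j k t x)" for x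
    using Yk_step[OF kj] .
  show ?case unfolding eq using c IH(2) sb by auto
qed

end



context casc begin

lemma Zc_FM: "(\<lambda>x. Zf m r x - mu) \<in> borel_measurable (FM m (ext r))"
  using Zf_FM[of m r] by (intro borel_measurable_diff borel_measurable_const)

lemma L_ext: "length r = j \<Longrightarrow> L j \<inter> ext r = {}"
  by (auto simp: L_def ext_def)

lemma Tz_r: "length r = j \<Longrightarrow> Tz m j r \<in> borel_measurable M \<and> integrable M (\<lambda>x. \<bar>Tz m j r x\<bar> powr rr) \<and>
   (\<integral>x. \<bar>Tz m j r x\<bar> powr rr \<partial>M) = (2 powr (- real j * p)) powr rr * EW (p*rr) ^ j * KZ"
proof -
  assume len: "length r = j"
  have d: "L j \<inter> ext r = {}" using L_ext[OF len] .
  have QL: "Q m r p \<in> borel_measurable (FM m (L j))" using Q_FM[of m r p] len by simp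
  have m1: "(\<lambda>x. \<bar>Q m r p x\<bar> powr rr) \<in> borel_measurable (FM m (L j))" using QL by (intro measurable_abs_powr)
  have m2: "(\<lambda>x. \<bar>Zf m r x - mu\<bar> powr rr) \<in> borel_measurable (FM m (ext r))" using Zc_FM by (intro measurable_abs_powr)
  note I = indep_FM_integral[OF d L_NE ext_NE m1 m2 Q_r(1) Zfc(3)]
  have eq: "\<bar>Tz m j r x\<bar> powr rr = (2 powr (- real j * p)) powr rr * (\<bar>Q m r p x\<bar> powr rr * \<bar>Zf m r x - mu\<bar> powr rr)" for x
    unfolding Tz_def by (simp add: abs_mult powr_mult)
  have "Tz m j r \<in> borel_measurable M" unfolding Tz_def using Q_meas Zf_rv
    by (intro borel_measurable_times borel_measurable_const borel_measurable_diff) auto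
  moreover have "integrable M (\<lambda>x. \<bar>Tz m j r x\<bar> powr rr)" unfolding eq using I(1) by auto
  moreover have "(\<integral>x. \<bar>Tz m j r x\<bar> powr rr \<partial>M) = (2 powr (- real j * p)) powr rr * EW (p*rr) ^ j * KZ"
    unfolding eq using I(2) Q_r(2)[of m r] Zfc(4)[of m r] len by simp
  ultimately show ?thesis by blast
qed

lemma Tz_orth:
  assumes R': "R' \<subseteq> {s. length s = j}" and s: "length s = j" "s \<notin> R'"
    and iX: "integrable M (\<lambda>x. \<bar>Yk m j j x + (\<Sum>t\<in>R'. Tz m j t x)\<bar> powr rr)"
  shows "(\<integral>x. phi rr (Yk m j j x + (\<Sum>t\<in>R'. Tz m j t x)) * Tz m j s x \<partial>M) = 0"
proof -
  define B where "B = L j \<union> (\<Union>t\<in>R'. ext t)"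
  have BNE: "B \<subseteq> NE" unfolding B_def using L_NE ext_NE by blast
  have nB: "w \<notin> B" if w0: "w \<in> ext s" for w
  proof -
    from w0 obtain v where w: "w = s @ v" "v \<noteq> []" by (auto simp: ext_def)
    have "w \<notin> L j" using w s by (auto simp: L_def)
    moreover have "w \<notin> ext t" if t: "t \<in> R'" for t
    proof
      assume "w \<in> ext t"
      then obtain v' where e: "s @ v = t @ v'" using w by (auto simp: ext_def)
      have "length s = length t" using R' t s by auto
      then have "s = t" using e by (simp add: append_eq_append_conv)
      then show False using t s by simp
    qed
    ultimately show ?thesis unfolding B_def by blast
  qed
  have d: "B \<inter> ext s = {}" using nB by blast
  define X where "X x = Yk m j j x + (\<Sum>t\<in>R'. Tz m j t x)" for x
  have LB: "L j \<subseteq> B" unfolding B_def by blast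
  have XB: "X \<in> borel_measurable (FM m B)"
    unfolding X_def Tz_def
  proof (intro borel_measurable_add borel_measurable_sum borel_measurable_times borel_measurable_const)
    show "Yk m j j \<in> borel_measurable (FM m B)" by (rule FM_mono[OF LB Yk_FM])
  next
    fix t assume t: "t \<in> R'"
    have lt: "length t = j" using R' t by auto
    have CB: "ext t \<subseteq> B" unfolding B_def using t by blast
    have QL: "Q m t p \<in> borel_measurable (FM m (L j))" using Q_FM[of m t p] lt by simp
    show "Q m t p \<in> borel_measurable (FM m B)" by (rule FM_mono[OF LB QL])
    show "(\<lambda>x. Zf m t x - mu) \<in> borel_measurable (FM m B)" by (rule FM_mono[OF CB Zc_FM])
  qed
  have QL: "Q m s p \<in> borel_measurable (FM m (L j))" using Q_FM[of m s p] s(1) by simp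
  have QB: "Q m s p \<in> borel_measurable (FM m B)" by (rule FM_mono[OF LB QL])
  have Y1B: "(\<lambda>x. phi rr (X x) * Q m s p x) \<in> borel_measurable (FM m B)"
    using XB QB by (intro borel_measurable_times borel_measurable_phi)
  have iY1: "integrable M (\<lambda>x. phi rr (X x) * Q m s p x)"
    using integrable_phi_mult[OF rr(1) FM_meas[OF BNE XB] Q_meas iX[folded X_def] Q_r(1)] .
  have "(\<integral>x. (phi rr (X x) * Q m s p x) * (Zf m s x - mu) \<partial>M) = (\<integral>x. phi rr (X x) * Q m s p x \<partial>M) * (\<integral>x. Zf m s x - mu \<partial>M)"
    by (rule indep_FM_integral(2)[OF d BNE ext_NE Y1B Zc_FM iY1 Zfc(1)])
  also have "\<dots> = 0" using Zfc(2) by simp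
  finally have z: "(\<integral>x. (phi rr (X x) * Q m s p x) * (Zf m s x - mu) \<partial>M) = 0" .
  have "(\<integral>x. phi rr (X x) * Tz m j s x \<partial>M) = (\<integral>x. 2 powr (- real j * p) * ((phi rr (X x) * Q m s p x) * (Zf m s x - mu)) \<partial>M)"
    unfolding Tz_def by (intro Bochner_Integration.integral_cong) (simp_all add: mult_ac)
  also have "\<dots> = 0" using z by simp
  finally show ?thesis unfolding X_def .
qed

lemma final_bound: "integrable M (\<lambda>x. \<bar>cascM Wf Zf m j p x\<bar> powr rr) \<and>
  (\<integral>x. \<bar>cascM Wf Zf m j p x\<bar> powr rr \<partial>M) \<le> \<bar>cY j 0\<bar> powr rr + 17 * (\<Sum>i<j. 2^i * (\<bar>cY j (Suc i)\<bar> powr rr * EW (p*rr) ^ i * KU))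
     + 17 * (2^j * ((2 powr (- real j * p)) powr rr * EW (p*rr) ^ j * KZ))"
proof -
  have LB: "integrable M (\<lambda>x. \<bar>Yk m j j x\<bar> powr rr)"
    "(\<integral>x. \<bar>Yk m j j x\<bar> powr rr \<partial>M) \<le> \<bar>cY j 0\<bar> powr rr + 17 * (\<Sum>i<j. 2^i * (\<bar>cY j (Suc i)\<bar> powr rr * EW (p*rr) ^ i * KU))"
    using level_bound[of j j m] by auto
  have mY: "Yk m j j \<in> borel_measurable M" using FM_meas[OF L_NE Yk_FM] .
  note ch = chain[OF rr words_finite mY LB(1), where T="Tz m j"]
  have c: "integrable M (\<lambda>x. \<bar>Yk m j j x + (\<Sum>t\<in>{s. length s = j}. Tz m j t x)\<bar> powr rr) \<and>
    (\<integral>x. \<bar>Yk m j j x + (\<Sum>t\<in>{s. length s = j}. Tz m j t x)\<bar> powr rr \<partial>M)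
      \<le> (\<integral>x. \<bar>Yk m j j x\<bar> powr rr \<partial>M) + 17 * (\<Sum>t\<in>{s. length s = j}. \<integral>x. \<bar>Tz m j t x\<bar> powr rr \<partial>M)"
  proof (rule ch[THEN mp, THEN mp])
    show "\<forall>s\<in>{s. length s = j}. Tz m j s \<in> borel_measurable M \<and> integrable M (\<lambda>x. \<bar>Tz m j s x\<bar> powr rr)"
      using Tz_r by blast
    show "\<forall>R' s. R' \<subseteq> {s. length s = j} \<longrightarrow> s \<in> {s. length s = j} \<longrightarrow> s \<notin> R' \<longrightarrow>
       integrable M (\<lambda>x. \<bar>Yk m j j x + (\<Sum>t\<in>R'. Tz m j t x)\<bar> powr rr) \<longrightarrow>
       (\<integral>x. phi rr (Yk m j j x + (\<Sum>t\<in>R'. Tz m j t x)) * Tz m j s x \<partial>M) = 0"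
    proof (intro allI impI)
      fix R' s assume a: "R' \<subseteq> {s. length s = j}" "s \<in> {s::bool list. length s = j}" "s \<notin> R'"
        "integrable M (\<lambda>x. \<bar>Yk m j j x + (\<Sum>t\<in>R'. Tz m j t x)\<bar> powr rr)"
      show "(\<integral>x. phi rr (Yk m j j x + (\<Sum>t\<in>R'. Tz m j t x)) * Tz m j s x \<partial>M) = 0"
        using a by (intro Tz_orth) auto
    qed
  qed
  have sb: "(\<Sum>t\<in>{s. length s = j}. \<integral>x. \<bar>Tz m j t x\<bar> powr rr \<partial>M) = 2^j * ((2 powr (- real j * p)) powr rr * EW (p*rr) ^ j * KZ)"
  proof -
    have "(\<Sum>t\<in>{s. length s = j}. \<integral>x. \<bar>Tz m j t x\<bar> powr rr \<partial>M) = (\<Sum>t\<in>{s::bool list. length s = j}. (2 powr (- real j * p)) powr rr * EW (p*rr) ^ j * KZ)"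
      by (intro sum.cong) (use Tz_r in auto)
    also have "\<dots> = 2^j * ((2 powr (- real j * p)) powr rr * EW (p*rr) ^ j * KZ)" by (simp add: words_card)
    finally show ?thesis .
  qed
  have eq: "cascM Wf Zf m j p x = Yk m j j x + (\<Sum>t\<in>{s. length s = j}. Tz m j t x)" for x
    using casc_decomp .
  show ?thesis unfolding eq using c LB(2) sb by auto
qed

end



context casc begin

lemma EW_pos: "0 < EW a"
proof -
  have AEp: "AE x in M. W x powr a > 0" using W_pos by eventually_elim simp
  have ne: "EW a \<noteq> 0"
  proof
    assume "EW a = 0"
    then have "AE x in M. W x powr a = 0"
      using integral_nonneg_eq_0_iff_AE[OF W_moments[of a]] unfolding EW_def by auto
    with AEp have "AE x in M. False" by eventually_elim simp
    then show False by simp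
  qed
  then show ?thesis using EW_nonneg[of a] by simp
qed

lemma e_pos: "0 < e" unfolding e_def by (rule EW_pos)

definition le :: real where "le = log 2 e"
definition lq :: real where "lq = log 2 (EW (p*rr))"

lemma e_eq: "e = 2 powr le" unfolding le_def using e_pos by simp
lemma EWq_eq: "EW (p*rr) = 2 powr lq" unfolding lq_def using EW_pos by simp

lemma tau_p: "tau M W p = p - le - 1" unfolding tau_def le_def e_def EW_def ..
lemma tau_q: "tau M W (p*rr) = p*rr - lq - 1" unfolding tau_def lq_def EW_def ..

lemma pow2: "((2::real) powr x) ^ n = 2 powr (real n * x)"
  by (simp add: powr_realpow[symmetric] powr_powr mult.commute)

definition t :: "nat \<Rightarrow> nat \<Rightarrow> real" where
  "t j k = 2 powr (- real j * rr * tau M W p) * (2 powr (- real k * tau M W (p * rr)) * 2 powr (real k * rr * tau M W p))"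

lemma t_eq: "t j k = 2 powr (real j * rr * (1 + le - p) + real k * (rr * (p - le - 1) + 1 + lq - p*rr))"
  unfolding t_def tau_p tau_q by (simp add: powr_add[symmetric] algebra_simps)

lemma t_nonneg: "0 \<le> t j k" unfolding t_def by simp

lemma cY_abs: "\<bar>cY j k\<bar> powr rr = 2 powr (rr * (- real j * p + real (j-k) * (1 + le))) * \<bar>mu\<bar> powr rr"
proof -
  have "\<bar>cY j k\<bar> = 2 powr (- real j * p + real (j-k) * (1 + le)) * \<bar>mu\<bar>"
  proof -
    have "2*e = 2 powr (1 + le)" by (simp add: e_eq powr_add)
    then have h: "(2*e)^(j-k) = 2 powr (real (j-k) * (1 + le))" by (simp add: pow2)
    have h2: "2 powr (- real j * p + real (j-k) * (1+le)) = 2 powr (- real j * p) * 2 powr (real (j-k)*(1+le))"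
      by (rule powr_add)
    show ?thesis unfolding cY_def h h2 by (simp add: abs_mult)
  qed
  then show ?thesis by (simp add: powr_mult powr_powr mult.commute)
qed

lemma E0: "\<bar>cY j 0\<bar> powr rr = \<bar>mu\<bar> powr rr * t j 0"
  unfolding cY_abs t_eq by (simp add: algebra_simps)

definition c1 :: real where "c1 = 2 powr (- rr * (1 + le)) * \<bar>mu\<bar> powr rr * KU"

lemma Ei: assumes "i < j"
  shows "2^i * (\<bar>cY j (Suc i)\<bar> powr rr * EW (p*rr) ^ i * KU) = c1 * t j i"
proof -
  have r: "real (j - Suc i) = real j - real i - 1" using assms by simp
  have "2^i * (\<bar>cY j (Suc i)\<bar> powr rr * EW (p*rr) ^ i * KU)
    = (2 powr (real i) * (2 powr (rr * (- real j * p + (real j - real i - 1) * (1 + le))) * 2 powr (real i * lq))) * \<bar>mu\<bar> powr rr * KU"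
    unfolding cY_abs EWq_eq pow2 r by (simp add: powr_realpow)
  also have "\<dots> = 2 powr (real i + rr * (- real j * p + (real j - real i - 1) * (1 + le)) + real i * lq) * \<bar>mu\<bar> powr rr * KU"
    by (simp add: powr_add)
  also have "\<dots> = c1 * t j i"
  proof -
    have "real i + rr * (- real j * p + (real j - real i - 1) * (1 + le)) + real i * lq
      = - rr * (1 + le) + (real j * rr * (1 + le - p) + real i * (rr * (p - le - 1) + 1 + lq - p*rr))"
      by (simp add: algebra_simps)
    then show ?thesis unfolding c1_def t_eq by (simp add: powr_add)
  qed
  finally show ?thesis .
qed

lemma EZ: "2^j * ((2 powr (- real j * p)) powr rr * EW (p*rr) ^ j * KZ) = KZ * t j j"
proof -
  have "2^j * ((2 powr (- real j * p)) powr rr * EW (p*rr) ^ j * KZ)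
     = 2 powr (real j + (- real j * p * rr) + real j * lq) * KZ"
  proof -
    have a: "(2::real)^j = 2 powr real j" by (simp add: powr_realpow)
    have b: "(2 powr (- real j * p)) powr rr = 2 powr (- real j * p * rr)" by (simp only: powr_powr)
    show ?thesis unfolding EWq_eq pow2 a b by (simp only: powr_add mult.assoc)
  qed
  also have "\<dots> = KZ * t j j"
  proof -
    have "real j + (- real j * p * rr) + real j * lq = real j * rr * (1 + le - p) + real j * (rr * (p - le - 1) + 1 + lq - p*rr)"
      by (simp add: algebra_simps)
    then show ?thesis unfolding t_eq by simp
  qed
  finally show ?thesis .
qed

lemma KU_nonneg: "0 \<le> KU" unfolding KU_def using EW_nonneg by simp
lemma KZ_nonneg: "0 \<le> KZ" unfolding KZ_def by (intro integral_nonneg_AE) auto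

definition Cst :: real where "Cst = \<bar>mu\<bar> powr rr + 17 * c1 + 17 * KZ"

lemma bound_arith:
  "\<bar>cY j 0\<bar> powr rr + 17 * (\<Sum>i<j. 2^i * (\<bar>cY j (Suc i)\<bar> powr rr * EW (p*rr) ^ i * KU))
     + 17 * (2^j * ((2 powr (- real j * p)) powr rr * EW (p*rr) ^ j * KZ))
   \<le> Cst * (\<Sum>k=0..j. t j k)"
proof -
  have c1: "0 \<le> c1" unfolding c1_def using KU_nonneg by simp
  have S: "(\<Sum>i<j. 2^i * (\<bar>cY j (Suc i)\<bar> powr rr * EW (p*rr) ^ i * KU)) = c1 * (\<Sum>i<j. t j i)"
    by (simp add: Ei sum_distrib_left)
  have s1: "(\<Sum>i<j. t j i) \<le> (\<Sum>k=0..j. t j k)"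
    by (intro sum_mono2) (auto simp: t_nonneg)
  have s0: "t j 0 \<le> (\<Sum>k=0..j. t j k)"
    by (rule member_le_sum) (auto simp: t_nonneg)
  have sj: "t j j \<le> (\<Sum>k=0..j. t j k)"
    by (rule member_le_sum) (auto simp: t_nonneg)
  have "\<bar>mu\<bar> powr rr * t j 0 + 17 * (c1 * (\<Sum>i<j. t j i)) + 17 * (KZ * t j j)
      \<le> \<bar>mu\<bar> powr rr * (\<Sum>k=0..j. t j k) + 17 * (c1 * (\<Sum>k=0..j. t j k)) + 17 * (KZ * (\<Sum>k=0..j. t j k))"
    using s0 s1 sj c1 KZ_nonneg by (intro add_mono mult_left_mono) auto
  then show ?thesis unfolding E0 S EZ Cst_def by (simp add: algebra_simps)
qed

lemma main:
  "(\<integral>\<^sup>+ x. ennreal (\<bar>cascM Wf Zf m j p x\<bar> powr (1 + \<epsilon>)) \<partial>M)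
       \<le> ennreal (Cst * 2 powr (- real j * (1 + \<epsilon>) * tau M W p) *
           (\<Sum>k=0..j. 2 powr (- real k * tau M W (p * (1 + \<epsilon>))) *
                      2 powr (real k * (1 + \<epsilon>) * tau M W p)))"
proof -
  note fb = final_bound[of m j]
  have "(\<integral>\<^sup>+ x. ennreal (\<bar>cascM Wf Zf m j p x\<bar> powr rr) \<partial>M) = ennreal (\<integral>x. \<bar>cascM Wf Zf m j p x\<bar> powr rr \<partial>M)"
    using fb by (intro nn_integral_eq_integral) auto
  also have "\<dots> \<le> ennreal (Cst * (\<Sum>k=0..j. t j k))"
    using fb bound_arith[of j] by (intro ennreal_leI) auto
  also have "Cst * (\<Sum>k=0..j. t j k) = Cst * 2 powr (- real j * rr * tau M W p) *
           (\<Sum>k=0..j. 2 powr (- real k * tau M W (p * rr)) * 2 powr (real k * rr * tau M W p))"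
    unfolding t_def by (simp add: sum_distrib_left mult.assoc)
  finally show ?thesis .
qed

end

theorem lemmaA2:
  fixes M :: "'a measure"
    and W Z :: "'a \<Rightarrow> real"
    and Wf Zf :: "nat \<Rightarrow> bool list \<Rightarrow> 'a \<Rightarrow> real"
    and p \<epsilon> :: real
  assumes "prob_space M"
    and W_rv: "W \<in> borel_measurable M"
    and W_pos: "AE x in M. W x > 0"
    and W_mean: "integral\<^sup>L M W = 1"
    and W_moments: "\<And>q::real. integrable M (\<lambda>x. W x powr q)"
    and Wf_rv: "\<And>m r. r \<noteq> [] \<Longrightarrow> Wf m r \<in> borel_measurable M"
    and Wf_law: "\<And>m r. r \<noteq> [] \<Longrightarrow> distr M borel (Wf m r) = distr M borel W"
    and Wf_indep: "prob_space.indep_vars M (\<lambda>_. borel) (\<lambda>(m, r). Wf m r) {(m, r). r \<noteq> []}"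
    and Z_rv: "Z \<in> borel_measurable M"
    and Zf_meas: "\<And>m r. measurable_wrt M (Zf m r) (\<lambda>r'. Wf m (r @ r')) {r'. r' \<noteq> []}"
    and Zf_law: "\<And>m r. distr M borel (Zf m r) = distr M borel Z"
    and eps: "0 < \<epsilon>" "\<epsilon> \<le> 1"
    and Z_mom: "integrable M (\<lambda>x. \<bar>Z x\<bar> powr (1 + \<epsilon>))"
  shows "\<exists>C::real. \<forall>m j.
     (\<integral>\<^sup>+ x. ennreal (\<bar>cascM Wf Zf m j p x\<bar> powr (1 + \<epsilon>)) \<partial>M)
       \<le> ennreal (C * 2 powr (- real j * (1 + \<epsilon>) * tau M W p) *
           (\<Sum>k=0..j. 2 powr (- real k * tau M W (p * (1 + \<epsilon>))) *
                      2 powr (real k * (1 + \<epsilon>) * tau M W p)))"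
  proof -
  interpret casc M W Z Wf Zf p \<epsilon>
    using assms unfolding casc_def casc_axioms_def by auto
  show ?thesis by (intro exI[of _ Cst] allI main)
qed

end
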